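(* For every integer $p\geq 2$ and $d\geq 3$ there exists a finite group $\Gamma$ and a subset $D=\{\gamma_1,\ldots,\gamma_d\}\subseteq\Gamma$ with $|D|=d$ such that $(\Gamma,D)$ satisfies condition $\mathcal{G}(p)$.
   Context: For $p\geq 1$, the pair $(\Gamma,D)$ (with $\Gamma$ having identity $e$) satisfies condition $\mathcal{R}(p)$ if for every sequence of indices $i_0,\ldots,i_{2p-1}\in\{1,\ldots,d\}$ the equality $\gamma_{i_0}\gamma_{i_1}^{-1}\gamma_{i_2}\gamma_{i_3}^{-1}\cdots\gamma_{i_{2p-2}}\gamma_{i_{2p-1}}^{-1}=e$ implies $i_l=i_{l+1}$ for some $l\in\{0,\ldots,2p-1\}$ (indices modulo $2p$). It satisfies $\mathcal{G}(p)$ if it satisfies $\mathcal{R}(1),\ldots,\mathcal{R}(p)$. *)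

theory Defs
  imports "HOL-Algebra.Group"
begin

fun alt_word :: "('a, 'b) monoid_scheme \<Rightarrow> (nat \<Rightarrow> 'a) \<Rightarrow> (nat \<Rightarrow> nat) \<Rightarrow> nat \<Rightarrow> 'a" where
  "alt_word G g i 0 = \<one>\<^bsub>G\<^esub>"
| "alt_word G g i (Suc k) =
     alt_word G g i k \<otimes>\<^bsub>G\<^esub> (g (i (2*k)) \<otimes>\<^bsub>G\<^esub> inv\<^bsub>G\<^esub> (g (i (2*k+1))))"

definition cond_R :: "('a, 'b) monoid_scheme \<Rightarrow> (nat \<Rightarrow> 'a) \<Rightarrow> nat \<Rightarrow> nat \<Rightarrow> bool" where
  "cond_R G g d p \<longleftrightarrow>
     (\<forall>i :: nat \<Rightarrow> nat. (\<forall>l < 2*p. i l \<in> {1..d}) \<longrightarrow> alt_word G g i p = \<one>\<^bsub>G\<^esub> \<longrightarrow>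
        (\<exists>l < 2*p. i l = i ((l+1) mod (2*p))))"

definition cond_G :: "('a, 'b) monoid_scheme \<Rightarrow> (nat \<Rightarrow> 'a) \<Rightarrow> nat \<Rightarrow> nat \<Rightarrow> bool" where
  "cond_G G g d p \<longleftrightarrow> (\<forall>q\<in>{1..p}. cond_R G g d q)"

end

theory Submission
  imports Defs "HOL-Algebra.Bij"
begin

definition tg :: "nat \<Rightarrow> nat \<Rightarrow> nat list \<Rightarrow> nat list" where
  "tg N a w = (if w \<noteq> [] \<and> hd w = a then tl w else if length w < N then a # w else w)"

definition XX :: "nat \<Rightarrow> nat \<Rightarrow> nat list set" where
  "XX d N = {w. set w \<subseteq> {1..d} \<and> length w \<le> N \<and> successively (\<noteq>) w}"

lemma finite_XX: "finite (XX d N)"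
proof -
  have "XX d N \<subseteq> {xs. set xs \<subseteq> {1..d} \<and> length xs \<le> N}" unfolding XX_def by auto
  thus ?thesis using finite_lists_length_le[of "{1..d}" N] finite_subset by blast
qed

lemma tg_in: assumes "a \<in> {1..d}" "w \<in> XX d N" shows "tg N a w \<in> XX d N"
proof (cases w)
  case Nil thus ?thesis using assms by (auto simp: XX_def tg_def)
next
  case (Cons x xs)
  thus ?thesis using assms by (auto simp: XX_def tg_def successively_Cons)
qed

lemma tg_tg: assumes "w \<in> XX d N" shows "tg N a (tg N a w) = w"
proof (cases w)
  case Nil thus ?thesis using assms by (auto simp: XX_def tg_def)
next
  case (Cons x xs)
  thus ?thesis using assms by (cases xs) (auto simp: XX_def tg_def)
qed

definition TT :: "nat \<Rightarrow> nat \<Rightarrow> nat \<Rightarrow> nat list \<Rightarrow> nat list" where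
  "TT d N a = (\<lambda>w\<in>XX d N. tg N a w)"

lemma TT_Bij: assumes "a \<in> {1..d}" shows "TT d N a \<in> Bij (XX d N)"
proof -
  have "bij_betw (TT d N a) (XX d N) (XX d N)"
    by (rule bij_betw_byWitness[where f'="TT d N a"]) (auto simp: TT_def tg_in[OF assms] tg_tg)
  thus ?thesis unfolding Bij_def TT_def by auto
qed

lemma TT_inv: assumes "a \<in> {1..d}" shows "inv\<^bsub>BijGroup (XX d N)\<^esub> (TT d N a) = TT d N a"
proof -
  have "TT d N a \<otimes>\<^bsub>BijGroup (XX d N)\<^esub> TT d N a = \<one>\<^bsub>BijGroup (XX d N)\<^esub>"
    using TT_Bij[OF assms, of N]
    by (auto simp: BijGroup_def compose_def TT_def tg_in[OF assms] tg_tg)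
  moreover have "carrier (BijGroup (XX d N)) = Bij (XX d N)" by (simp add: BijGroup_def)
  ultimately show ?thesis using group.inv_equality[OF group_BijGroup] TT_Bij[OF assms] by metis
qed

lemma Bij_mult_apply: "x \<in> Bij S \<Longrightarrow> y \<in> Bij S \<Longrightarrow> w \<in> S \<Longrightarrow> (x \<otimes>\<^bsub>BijGroup S\<^esub> y) w = x (y w)"
  by (simp add: BijGroup_def compose_def)

lemma alt_word_closed:
  assumes "group H" "\<forall>l < 2*k. g (i l) \<in> carrier H"
  shows "alt_word H g i k \<in> carrier H"
  using assms
proof (induction k)
  case 0 thus ?case by (simp add: group.is_monoid monoid.one_closed)
next
  case (Suc k)
  have "g (i (2*k)) \<in> carrier H" "g (i (2*k+1)) \<in> carrier H" using Suc.prems by auto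
  moreover have "alt_word H g i k \<in> carrier H" using Suc by auto
  ultimately show ?case using Suc.prems(1)
    by (simp add: group.inv_closed monoid.m_closed group.is_monoid)
qed

lemma alt_word_hom:
  assumes "group H" "group G" "e \<in> hom H G" "\<forall>l < 2*k. T (i l) \<in> carrier H"
  shows "alt_word G (\<lambda>a. e (T a)) i k = e (alt_word H T i k)"
  using assms(4)
proof (induction k)
  case 0 thus ?case using assms group_hom.hom_one[of H G e] by (simp add: group_hom_def group_hom_axioms_def)
next
  case (Suc k)
  interpret gh: group_hom H G e using assms by (simp add: group_hom_def group_hom_axioms_def)
  have c: "T (i (2*k)) \<in> carrier H" "T (i (2*k+1)) \<in> carrier H" using Suc.prems by auto
  have w: "alt_word H T i k \<in> carrier H" using alt_word_closed[OF assms(1)] Suc.prems by auto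
  have ih: "alt_word G (\<lambda>a. e (T a)) i k = e (alt_word H T i k)" using Suc by auto
  show ?case using c w by (simp add: ih)
qed

lemma succ_upt:
  "(\<forall>l. m \<le> l \<longrightarrow> Suc l < n \<longrightarrow> i l \<noteq> i (Suc l)) \<Longrightarrow> successively (\<noteq>) (map i [m..<n])"
proof (induction "n - m" arbitrary: m)
  case 0 thus ?case by simp
next
  case (Suc x)
  then have mn: "m < n" by simp
  have ih: "successively (\<noteq>) (map i [Suc m..<n])" using Suc by auto
  show ?case
  proof (cases "Suc m < n")
    case True
    then show ?thesis using ih Suc.prems mn by (simp add: upt_conv_Cons successively_Cons)
  next
    case False
    then show ?thesis using mn by (simp add: upt_conv_Cons)
  qed
qed

lemma key:
  fixes q :: nat
  assumes q: "q \<le> p" and dom: "\<forall>l<2*q. i l \<in> {1..d}"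
    and nadj: "\<forall>l. Suc l < 2*q \<longrightarrow> i l \<noteq> i (Suc l)"
  shows "k \<le> q \<Longrightarrow> alt_word (BijGroup (XX d (2*p))) (TT d (2*p)) i k (map i [2*k..<2*q]) = map i [0..<2*q]"
proof (induction k)
  case 0
  have "map i [0..<2*q] \<in> XX d (2*p)" unfolding XX_def using dom q by (auto intro!: succ_upt simp: nadj)
  thus ?case by (simp add: BijGroup_def)
next
  case (Suc k)
  let ?H = "BijGroup (XX d (2*p))"
  let ?T = "TT d (2*p)"
  define L where "L m = map i [m..<2*q]" for m
  have LX: "L m \<in> XX d (2*p)" for m
    unfolding L_def XX_def using dom q by (auto intro!: succ_upt simp: nadj)
  have step: "?T (i m) (L (Suc m)) = L m" if "m < 2*q" for m
  proof -
    have "tg (2*p) (i m) (L (Suc m)) = i m # L (Suc m)"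
    proof (cases "Suc m < 2*q")
      case True
      then show ?thesis using nadj q unfolding tg_def L_def by (auto simp: upt_conv_Cons)
    next
      case False
      then show ?thesis using that q unfolding tg_def L_def by auto
    qed
    also have "\<dots> = L m" using that unfolding L_def by (simp add: upt_conv_Cons)
    finally show ?thesis using LX unfolding TT_def by simp
  qed
  have B: "?T (i l) \<in> Bij (XX d (2*p))" if "l < 2*q" for l using TT_Bij dom that by auto
  have cB: "carrier ?H = Bij (XX d (2*p))" by (simp add: BijGroup_def)
  have W0: "alt_word ?H ?T i k \<in> carrier ?H"
    by (rule alt_word_closed[OF group_BijGroup]) (use B Suc.prems cB in auto)
  have W: "alt_word ?H ?T i k \<in> Bij (XX d (2*p))" using W0 cB by simp
  have inv: "inv\<^bsub>?H\<^esub> (?T (i (2*k+1))) = ?T (i (2*k+1))" using TT_inv dom Suc.prems by auto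
  have B1: "?T (i (2*k)) \<in> Bij (XX d (2*p))" "?T (i (2*k+1)) \<in> Bij (XX d (2*p))"
    using B Suc.prems by auto
  have M: "?T (i (2*k)) \<otimes>\<^bsub>?H\<^esub> ?T (i (2*k+1)) \<in> Bij (XX d (2*p))"
    using B1 monoid.m_closed[OF group.is_monoid[OF group_BijGroup]] cB by metis
  have "alt_word ?H ?T i (Suc k) = alt_word ?H ?T i k \<otimes>\<^bsub>?H\<^esub> (?T (i (2*k)) \<otimes>\<^bsub>?H\<^esub> ?T (i (2*k+1)))"
    using inv by simp
  then have "alt_word ?H ?T i (Suc k) (L (2 * Suc k))
      = alt_word ?H ?T i k (?T (i (2*k)) (?T (i (2*k+1)) (L (2*k+2))))"
    using Bij_mult_apply[OF W M LX] Bij_mult_apply[OF B1 LX] by simp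
  also have "\<dots> = alt_word ?H ?T i k (L (2*k))"
    using step[of "2*k+1"] step[of "2*k"] Suc.prems by simp
  also have "\<dots> = L 0" using Suc L_def by simp
  finally show ?case unfolding L_def by simp
qed

theorem proposition5p4:
  fixes p d :: nat
  assumes "p \<ge> 2" and "d \<ge> 3"
  shows "\<exists>(G :: nat monoid) (g :: nat \<Rightarrow> nat).
           group G \<and> finite (carrier G) \<and>
           g ` {1..d} \<subseteq> carrier G \<and> card (g ` {1..d}) = d \<and>
           cond_G G g d p"
proof -
  define X where "X = XX d (2*p)"
  define H where "H = BijGroup X"
  have grH: "group H" unfolding H_def by (rule group_BijGroup)
  have cH: "carrier H = Bij X" by (simp add: H_def BijGroup_def)
  have "Bij X \<subseteq> PiE X (\<lambda>_. X)"
    by (auto simp: Bij_def PiE_def bij_betw_def)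
  hence finH: "finite (carrier H)" using cH finite_PiE[of X "\<lambda>_. X"] finite_XX X_def
    by (metis finite_subset)
  obtain e :: "(nat list \<Rightarrow> nat list) \<Rightarrow> nat" and n where e: "e ` carrier H = {i. i < n}" "inj_on e (carrier H)"
    using finite_imp_inj_to_nat_seg[OF finH] by blast
  define G :: "nat monoid" where "G = \<lparr>carrier = e ` carrier H,
     mult = \<lambda>x y. e (inv_into (carrier H) e x \<otimes>\<^bsub>H\<^esub> inv_into (carrier H) e y), one = e \<one>\<^bsub>H\<^esub>\<rparr>"
  have hom: "e \<in> hom H G"
    unfolding hom_def G_def using e(2) by (auto simp: inv_into_f_f)
  have "group (G\<lparr>carrier := e ` carrier H, one := e \<one>\<^bsub>H\<^esub>\<rparr>)"
    using group.hom_imp_img_group[OF grH hom] .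
  moreover have "G\<lparr>carrier := e ` carrier H, one := e \<one>\<^bsub>H\<^esub>\<rparr> = G" by (simp add: G_def)
  ultimately have grG: "group G" by simp
  have finG: "finite (carrier G)" using finH by (simp add: G_def)
  define T where "T = TT d (2*p)"
  have TB: "a \<in> {1..d} \<Longrightarrow> T a \<in> carrier H" for a using TT_Bij cH T_def X_def by auto
  define g where "g = (\<lambda>a. e (T a))"
  have sub: "g ` {1..d} \<subseteq> carrier G" using TB by (auto simp: g_def G_def)
  have nilX: "[] \<in> X" by (simp add: X_def XX_def)
  have p1: "0 < 2*p" using assms by simp
  have "inj_on g {1..d}"
  proof (rule inj_onI)
    fix a b assume ab: "a \<in> {1..d}" "b \<in> {1..d}" "g a = g b"
    then have "T a = T b" using e(2) TB unfolding g_def inj_on_def by blast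
    then have "T a [] = T b []" by simp
    then show "a = b" using nilX p1 by (simp add: T_def TT_def X_def tg_def)
  qed
  hence card: "card (g ` {1..d}) = d" by (simp add: card_image)
  have "cond_G G g d p"
    unfolding cond_G_def cond_R_def
  proof (intro ballI allI impI)
    fix q i assume q: "q \<in> {1..p}" and dom: "\<forall>l<2*q. i l \<in> {1..d}"
      and one: "alt_word G g i q = \<one>\<^bsub>G\<^esub>"
    show "\<exists>l<2*q. i l = i ((l + 1) mod (2*q))"
    proof (rule ccontr)
      assume "\<not> ?thesis"
      hence nadj: "\<forall>l. Suc l < 2*q \<longrightarrow> i l \<noteq> i (Suc l)"
        by (metis Suc_eq_plus1 Suc_lessD mod_less)
      have qp: "q \<le> p" using q by simp
      have kk: "alt_word H T i q (map i [2*q..<2*q]) = map i [0..<2*q]"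
        using key[OF qp dom nadj, of q] unfolding H_def T_def X_def by simp
      have TBi: "\<forall>l<2*q. T (i l) \<in> carrier H" using TB dom by auto
      have aw: "alt_word G g i q = e (alt_word H T i q)"
        unfolding g_def using alt_word_hom[where T=T and i=i and k=q, OF grH grG hom TBi] by simp
      have Wc: "alt_word H T i q \<in> carrier H" using alt_word_closed[where g=T and i=i and k=q, OF grH TBi] .
      have "e (alt_word H T i q) = e \<one>\<^bsub>H\<^esub>" using one aw by (simp add: G_def)
      hence "alt_word H T i q = \<one>\<^bsub>H\<^esub>"
        using e(2) Wc monoid.one_closed[OF group.is_monoid[OF grH]] unfolding inj_on_def by blast
      hence "map i [0..<2*q] = []" using kk nilX by (simp add: H_def BijGroup_def)
      thus False using q by simp
    qed
  qed
  show ?thesis using grG finG sub card \<open>cond_G G g d p\<close> by blast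
qed

end
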